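(* Let $\mathcal{L}$ be a nonempty set and $\mathcal{C}: 2^{\mathcal{L}}\to 2^{\mathcal{L}}$ an L-logics. Then the relation $<^{+}$ on theories is irreflexive, and hence a strict partial order.
   Context: An L-logics is a map $\mathcal{C}: 2^{\mathcal{L}}\to 2^{\mathcal{L}}$ satisfying Inclusion ($A\subseteq\mathcal{C}(A)$ for all $A$) and Loop: for every $n\ge1$ and $A_0,\dots,A_{n-1}\subseteq\mathcal{L}$, if $A_i\subseteq\mathcal{C}(A_{i+1})$ for all $i=0,\dots,n-1$ (indices mod $n$) then $\mathcal{C}(A_0)=\mathcal{C}(A_1)$. A theory is a set $T\subseteq\mathcal{L}$ with $\mathcal{C}(T)=T$. For theories $T,S$: $T\le S$ iff there is $A\subseteq S$ with $\mathcal{C}(A)=T$; $T<S$ iff $T\le S$ and $S\not\le T$. $<^{+}$ is the transitive closure of $<$ on the set of theories. *)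

theory Defs
  imports Main
begin

text \<open>The language L is the (nonempty) type 'a; C maps subsets of L to subsets of L.\<close>

definition L_logic :: "('a set \<Rightarrow> 'a set) \<Rightarrow> bool" where
  "L_logic C \<longleftrightarrow>
     (\<forall>A. A \<subseteq> C A) \<and>
     (\<forall>n::nat. \<forall>As :: nat \<Rightarrow> 'a set. n \<ge> 1 \<longrightarrow>
        (\<forall>i<n. As i \<subseteq> C (As ((i + 1) mod n))) \<longrightarrow> C (As 0) = C (As (1 mod n)))"

definition is_theory :: "('a set \<Rightarrow> 'a set) \<Rightarrow> 'a set \<Rightarrow> bool" where
  "is_theory C T \<longleftrightarrow> C T = T"

definition theory_le :: "('a set \<Rightarrow> 'a set) \<Rightarrow> 'a set \<Rightarrow> 'a set \<Rightarrow> bool" where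
  "theory_le C T S \<longleftrightarrow> (\<exists>A. A \<subseteq> S \<and> C A = T)"

definition theory_less :: "('a set \<Rightarrow> 'a set) \<Rightarrow> 'a set \<Rightarrow> 'a set \<Rightarrow> bool" where
  "theory_less C T S \<longleftrightarrow> theory_le C T S \<and> \<not> theory_le C S T"

definition theory_less_rel :: "('a set \<Rightarrow> 'a set) \<Rightarrow> ('a set \<times> 'a set) set" where
  "theory_less_rel C = {(T, S). is_theory C T \<and> is_theory C S \<and> theory_less C T S}"

end

theory Submission
  imports Defs
begin

lemma path_lemma:
  assumes "(T, S) \<in> (theory_less_rel C)\<^sup>+"
  shows "\<exists>m X. m \<ge> 2 \<and> C (X 0) = T \<and> X (m - 1) = S \<and> is_theory C (X 1)
    \<and> theory_less C T (X 1) \<and> (\<forall>j. j + 1 < m \<longrightarrow> X j \<subseteq> C (X (Suc j)))"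
  using assms
proof (induction rule: trancl_induct)
  case (base S)
  then have th: "is_theory C S" "theory_less C T S" by (auto simp: theory_less_rel_def)
  then obtain A where A: "A \<subseteq> S" "C A = T" by (auto simp: theory_less_def theory_le_def)
  let ?X = "\<lambda>j::nat. if j = 0 then A else S"
  have "C (?X 0) = T \<and> ?X (2 - 1) = S \<and> is_theory C (?X 1) \<and> theory_less C T (?X 1)
     \<and> (\<forall>j. j + 1 < 2 \<longrightarrow> ?X j \<subseteq> C (?X (Suc j)))"
    using A th by (auto simp: is_theory_def)
  then show ?case by (intro exI[of _ 2] exI[of _ ?X]) auto
next
  case (step S U)
  then obtain m X where H: "m \<ge> 2" "C (X 0) = T" "X (m - 1) = S" "is_theory C (X 1)"
    "theory_less C T (X 1)" "\<forall>j. j + 1 < m \<longrightarrow> X j \<subseteq> C (X (Suc j))" by blast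
  from step have th: "is_theory C S" "is_theory C U" "theory_less C S U"
    by (auto simp: theory_less_rel_def)
  then obtain B where B: "B \<subseteq> U" "C B = S" by (auto simp: theory_less_def theory_le_def)
  define Y where "Y = X(m := B, Suc m := U)"
  have "C (Y 0) = T" "Y (m + 2 - 1) = U" "Y 1 = X 1" using H by (auto simp: Y_def)
  moreover have "\<forall>j. j + 1 < m + 2 \<longrightarrow> Y j \<subseteq> C (Y (Suc j))"
  proof (intro allI impI)
    fix j assume j: "j + 1 < m + 2"
    consider "j + 1 < m" | "j + 1 = m" | "j = m" using j by linarith
    then show "Y j \<subseteq> C (Y (Suc j))"
    proof cases
      case 1 then show ?thesis using H(6) by (auto simp: Y_def)
    next
      case 2 then have "j = m - 1" "Suc j = m" by auto
      then show ?thesis using H(3) B th(1) by (auto simp: Y_def is_theory_def)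
    next
      case 3 then show ?thesis using B th(2) by (auto simp: Y_def is_theory_def)
    qed
  qed
  ultimately show ?case using H
    by (intro exI[of _ "m+2"] exI[of _ Y]) auto
qed

theorem lemma19:
  fixes C :: "'a set \<Rightarrow> 'a set"
  assumes "L_logic C"
  shows "irrefl ((theory_less_rel C)\<^sup>+) \<and> trans ((theory_less_rel C)\<^sup>+)"
proof
  show "irrefl ((theory_less_rel C)\<^sup>+)"
    unfolding irrefl_def
  proof (intro allI notI)
    fix T assume "(T, T) \<in> (theory_less_rel C)\<^sup>+"
    from path_lemma[OF this] obtain m X where H: "m \<ge> 2" "C (X 0) = T" "X (m - 1) = T"
      "is_theory C (X 1)" "theory_less C T (X 1)"
      "\<forall>j. j + 1 < m \<longrightarrow> X j \<subseteq> C (X (Suc j))" by blast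
    have loop: "\<forall>i<m. X i \<subseteq> C (X ((i + 1) mod m))"
    proof (intro allI impI)
      fix i assume i: "i < m"
      show "X i \<subseteq> C (X ((i + 1) mod m))"
      proof (cases "i + 1 < m")
        case True then show ?thesis using H(6) by auto
      next
        case False then have "i + 1 = m" using i by auto
        then have "i = m - 1" "(i+1) mod m = 0" by auto
        then show ?thesis using H(2,3) by simp
      qed
    qed
    have "C (X 0) = C (X (1 mod m))"
      using assms H(1) loop unfolding L_logic_def by (meson le_trans one_le_numeral)
    then have "T = X 1" using H(1,2,4) by (simp add: is_theory_def)
    moreover have "theory_le C T T" using H(2) unfolding theory_le_def
      by (metis H(4) \<open>T = X 1\<close> is_theory_def order_refl)
    ultimately show False using H(5) by (simp add: theory_less_def)
  qed
  show "trans ((theory_less_rel C)\<^sup>+)" by (rule trans_trancl)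
qed

end
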